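(* Let $\mathfrak{g}=V\rtimes\mathfrak{h}$ with $V$ an abelian ideal and $\mathfrak{h}$ a complementary subalgebra, let $\zeta\in\mathcal{Q}_0(\mathfrak{g})$ be a continuous normalized Lie quasi-state and let $X\in\mathfrak{h}$. Then the function $\zeta_X:V\to\mathbb{R}$, $\zeta_X(v)=\zeta(v,X)$, satisfies $\lim_{v\to\infty}\zeta_X(v)/\|v\|=0$ for any norm on $V$.
   Context: A Lie quasi-state is $\zeta:\mathfrak{g}\to\mathbb{R}$ with $\zeta(aX+bY)=a\zeta(X)+b\zeta(Y)$ for all $a,b\in\mathbb{R}$ and commuting $X,Y$. It is normalized if $\zeta(v,0)=\zeta(0,X)=0$ for all $v\in V$, $X\in\mathfrak{h}$; $\mathcal{Q}_0(\mathfrak{g})$ denotes the continuous normalized Lie quasi-states. *)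

theory Defs
  imports "HOL-Analysis.Analysis"
begin

definition lie_bracket :: "('h::euclidean_space \<Rightarrow> 'h \<Rightarrow> 'h) \<Rightarrow> bool" where
  "lie_bracket br \<longleftrightarrow> bilinear br \<and> (\<forall>X. br X X = 0) \<and>
     (\<forall>X Y Z. br X (br Y Z) + br Y (br Z X) + br Z (br X Y) = 0)"

text \<open>A representation of the Lie algebra (h, br) on the vector space V (action by derivations
  of the abelian Lie algebra V, i.e. by linear maps).\<close>
definition lie_rep :: "('h::euclidean_space \<Rightarrow> 'h \<Rightarrow> 'h) \<Rightarrow> ('h \<Rightarrow> 'v::euclidean_space \<Rightarrow> 'v) \<Rightarrow> bool" where
  "lie_rep br \<rho> \<longleftrightarrow> bilinear \<rho> \<and>
     (\<forall>X Y v. \<rho> (br X Y) v = \<rho> X (\<rho> Y v) - \<rho> Y (\<rho> X v))"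

definition sd_bracket :: "('h \<Rightarrow> 'h \<Rightarrow> 'h) \<Rightarrow> ('h \<Rightarrow> 'v \<Rightarrow> 'v::ab_group_add) \<Rightarrow>
    'v \<times> 'h \<Rightarrow> 'v \<times> 'h \<Rightarrow> 'v \<times> 'h" where
  "sd_bracket br \<rho> p q = (\<rho> (snd p) (fst q) - \<rho> (snd q) (fst p), br (snd p) (snd q))"

definition lie_quasi_state :: "('g \<Rightarrow> 'g \<Rightarrow> 'g::real_vector) \<Rightarrow> ('g \<Rightarrow> real) \<Rightarrow> bool" where
  "lie_quasi_state brg \<zeta> \<longleftrightarrow>
     (\<forall>x y a b. brg x y = 0 \<longrightarrow> \<zeta> (a *\<^sub>R x + b *\<^sub>R y) = a * \<zeta> x + b * \<zeta> y)"

definition normalized_qs :: "('v::zero \<times> 'h::zero \<Rightarrow> real) \<Rightarrow> bool" where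
  "normalized_qs \<zeta> \<longleftrightarrow> (\<forall>v. \<zeta> (v, 0) = 0) \<and> (\<forall>X. \<zeta> (0, X) = 0)"

definition Q0 :: "('h \<Rightarrow> 'h \<Rightarrow> 'h) \<Rightarrow> ('h \<Rightarrow> 'v \<Rightarrow> 'v) \<Rightarrow>
    (('v::euclidean_space \<times> 'h::euclidean_space) \<Rightarrow> real) set" where
  "Q0 br \<rho> = {\<zeta>. lie_quasi_state (sd_bracket br \<rho>) \<zeta> \<and> normalized_qs \<zeta> \<and> continuous_on UNIV \<zeta>}"

definition is_norm :: "('v::real_vector \<Rightarrow> real) \<Rightarrow> bool" where
  "is_norm N \<longleftrightarrow> (\<forall>v. N v = 0 \<longleftrightarrow> v = 0) \<and> (\<forall>a v. N (a *\<^sub>R v) = \<bar>a\<bar> * N v) \<and>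
     (\<forall>v w. N (v + w) \<le> N v + N w)"

end

theory Submission
  imports Defs
begin

lemma isn:
  assumes "is_norm N"
  shows "N v = 0 \<longleftrightarrow> v = 0" "N (a *\<^sub>R v) = \<bar>a\<bar> * N v" "N (v + w) \<le> N v + N w"
  using assms unfolding is_norm_def by blast+

lemma isn_neg: "is_norm N \<Longrightarrow> N ((-1) *\<^sub>R x) = N x"
  using isn(2)[of N "-1" x] by simp

lemma isn0: "is_norm N \<Longrightarrow> N 0 = 0"
  using isn(1) by blast

lemma norm_sum_le:
  assumes "is_norm N" "finite S"
  shows "N (sum f S) \<le> (\<Sum>i\<in>S. N (f i))"
  using assms(2)
proof (induction S rule: finite_induct)
  case empty
  show ?case using isn0[OF assms(1)] by simp
next
  case (insert x F)
  have "N (f x + sum f F) \<le> N (f x) + N (sum f F)" by (rule isn(3)[OF assms(1)])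
  then show ?case using insert by simp
qed

lemma norm_upper:
  assumes "is_norm N"
  shows "\<exists>C>0. \<forall>v::'v::euclidean_space. N v \<le> C * norm v"
proof -
  define C where "C = (\<Sum>b\<in>(Basis::'v set). N b) + 1"
  have Nnn: "\<And>x. N x \<ge> 0"
  proof -
    fix x
    have "N (x + (-1) *\<^sub>R x) \<le> N x + N ((-1) *\<^sub>R x)" by (rule isn(3)[OF assms])
    moreover have "N ((-1) *\<^sub>R x) = N x" using isn_neg[OF assms] by blast
    moreover have "N 0 = 0" by (rule isn0[OF assms])
    ultimately show "N x \<ge> 0" by simp
  qed
  have Cpos: "C > 0" unfolding C_def using Nnn by (simp add: sum_nonneg add_nonneg_pos)
  have "N v \<le> C * norm v" for v :: 'v
  proof -
    have "N v = N (\<Sum>b\<in>Basis. (v \<bullet> b) *\<^sub>R b)" by (simp add: euclidean_representation)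
    also have "\<dots> \<le> (\<Sum>b\<in>Basis. N ((v \<bullet> b) *\<^sub>R b))" by (rule norm_sum_le[OF assms]) simp
    also have "\<dots> = (\<Sum>b\<in>Basis. \<bar>v \<bullet> b\<bar> * N b)" using assms unfolding is_norm_def by simp
    also have "\<dots> \<le> (\<Sum>b\<in>Basis. norm v * N b)"
      by (rule sum_mono) (simp add: Basis_le_norm Nnn mult_right_mono)
    also have "\<dots> = norm v * (C - 1)" by (simp add: C_def sum_distrib_left)
    also have "\<dots> \<le> C * norm v" by (simp add: algebra_simps)
    finally show ?thesis .
  qed
  then show ?thesis using Cpos by (intro exI[of _ C]) simp
qed

lemma norm_lower:
  assumes "is_norm N"
  shows "\<exists>c>0. \<forall>v::'v::euclidean_space. c * norm v \<le> N v"
proof -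
  obtain C where C: "C > 0" "\<And>v::'v. N v \<le> C * norm v" using norm_upper[OF assms] by blast
  have neg: "N ((-1) *\<^sub>R x) = N x" for x using isn_neg[OF assms] by blast
  have tri: "N (x + y) \<le> N x + N y" for x y by (rule isn(3)[OF assms])
  have lip: "\<bar>N x - N y\<bar> \<le> C * norm (x - y)" for x y :: 'v
  proof -
    have "N x \<le> N y + N (x - y)" using tri[of y "x - y"] by simp
    moreover have "N y \<le> N x + N (y - x)" using tri[of x "y - x"] by simp
    moreover have "N (y - x) = N (x - y)" using neg[of "x - y"] by simp
    moreover have "norm (y - x) = norm (x - y)" by (simp add: norm_minus_commute)
    ultimately show ?thesis using C(2)[of "x - y"] by linarith
  qed
  have cont: "continuous_on (sphere 0 1) N"
  proof (rule continuous_at_imp_continuous_on, intro ballI)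
    fix x :: 'v
    show "isCont N x" unfolding continuous_at_eps_delta
    proof (intro allI impI)
      fix e :: real assume "e > 0"
      show "\<exists>d>0. \<forall>y. dist y x < d \<longrightarrow> dist (N y) (N x) < e"
      proof (intro exI[of _ "e / C"] conjI allI impI)
        show "e / C > 0" using \<open>e>0\<close> C by simp
        fix y assume "dist y x < e / C"
        hence "C * norm (y - x) < e" using C by (simp add: dist_norm field_simps)
        thus "dist (N y) (N x) < e" using lip[of y x] by (simp add: dist_real_def)
      qed
    qed
  qed
  obtain b :: 'v where b: "b \<in> Basis" using nonempty_Basis by blast
  have "sphere (0::'v) 1 \<noteq> {}" using b by (auto simp: norm_Basis)
  then obtain u where u: "u \<in> sphere 0 1" "\<And>y. y \<in> sphere 0 1 \<Longrightarrow> N u \<le> N y"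
    using continuous_attains_inf[OF compact_sphere _ cont] by blast
  have "u \<noteq> 0" using u(1) by auto
  hence "N u \<noteq> 0" using isn(1)[OF assms] by blast
  moreover have "N u \<ge> 0"
  proof -
    have "N (u + (-1) *\<^sub>R u) \<le> N u + N ((-1) *\<^sub>R u)" by (rule tri)
    moreover have "N 0 = 0" by (rule isn0[OF assms])
    ultimately show ?thesis using neg[of u] by simp
  qed
  ultimately have cpos: "N u > 0" by simp
  have "N u * norm v \<le> N v" for v
  proof (cases "v = 0")
    case True
    have "N 0 = 0" by (rule isn0[OF assms])
    thus ?thesis using True by simp
  next
    case False
    have "N u \<le> N ((1 / norm v) *\<^sub>R v)" using u(2) False by simp
    also have "\<dots> = N v / norm v" using isn(2)[OF assms] by simp
    finally show ?thesis using False by (simp add: field_simps)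
  qed
  then show ?thesis using cpos by (intro exI[of _ "N u"]) simp
qed

theorem mainTheorem8:
  fixes br :: "'h::euclidean_space \<Rightarrow> 'h \<Rightarrow> 'h"
    and \<rho> :: "'h \<Rightarrow> 'v::euclidean_space \<Rightarrow> 'v"
    and \<zeta> :: "'v \<times> 'h \<Rightarrow> real"
    and X :: 'h
    and N :: "'v \<Rightarrow> real"
  assumes "lie_bracket br"
    and "lie_rep br \<rho>"
    and "\<zeta> \<in> Q0 br \<rho>"
    and "is_norm N"
  shows "\<forall>\<epsilon>>0. \<exists>R. \<forall>v. N v \<ge> R \<longrightarrow> \<bar>\<zeta> (v, X)\<bar> \<le> \<epsilon> * N v"
proof (intro allI impI)
  fix \<epsilon> :: real assume ep: "\<epsilon> > 0"
  have qs: "lie_quasi_state (sd_bracket br \<rho>) \<zeta>" and nz: "normalized_qs \<zeta>"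
    and ct: "continuous_on UNIV \<zeta>" using assms(3) unfolding Q0_def by auto
  have brXX: "br Y Y = 0" for Y using assms(1) unfolding lie_bracket_def by blast
  have hom: "\<zeta> (a *\<^sub>R p) = a * \<zeta> p" for a p
  proof -
    have "sd_bracket br \<rho> p p = 0" unfolding sd_bracket_def by (simp add: brXX zero_prod_def)
    hence "\<zeta> (a *\<^sub>R p + 0 *\<^sub>R p) = a * \<zeta> p + 0 * \<zeta> p" using qs unfolding lie_quasi_state_def by blast
    thus ?thesis by simp
  qed
  obtain C where C: "C > 0" "\<And>v::'v. N v \<le> C * norm v" using norm_upper[OF assms(4)] by blast
  obtain c where c: "c > 0" "\<And>v::'v. c * norm v \<le> N v" using norm_lower[OF assms(4)] by blast
  define K where "K = sphere (0::'v) 1 \<times> cball (0::'h) (norm X)"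
  have "compact K" unfolding K_def by (intro compact_Times compact_sphere compact_cball)
  hence uc: "uniformly_continuous_on K \<zeta>"
    by (rule compact_uniformly_continuous[OF continuous_on_subset[OF ct subset_UNIV]])
  obtain d where d: "d > 0" "\<And>x x'. x \<in> K \<Longrightarrow> x' \<in> K \<Longrightarrow> dist x' x < d \<Longrightarrow> dist (\<zeta> x') (\<zeta> x) < \<epsilon> * c"
  proof -
    have "\<epsilon> * c > 0" using ep c(1) by simp
    then obtain d where "d > 0" "\<forall>x\<in>K. \<forall>x'\<in>K. dist x' x < d \<longrightarrow> dist (\<zeta> x') (\<zeta> x) < \<epsilon> * c"
      using uc unfolding uniformly_continuous_on_def by blast
    then show ?thesis using that by blast
  qed
  define R' where "R' = max 1 (norm X / d + 1)"
  show "\<exists>R. \<forall>v. N v \<ge> R \<longrightarrow> \<bar>\<zeta> (v, X)\<bar> \<le> \<epsilon> * N v"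
  proof (intro exI[of _ "C * R'"] allI impI)
    fix v assume Nv: "C * R' \<le> N v"
    have "C * R' \<le> C * norm v" using Nv C(2)[of v] by linarith
    hence tv: "norm v \<ge> R'" using C(1) by (simp add: mult_le_cancel_left_pos)
    define t where "t = norm v"
    have t1: "t \<ge> 1" using tv unfolding t_def R'_def by simp
    have tX: "t > norm X / d" using tv unfolding t_def R'_def by simp
    define u where "u = (1/t) *\<^sub>R v"
    have tpos: "t > 0" using t1 by simp
    have eq: "(v, X) = t *\<^sub>R (u, (1/t) *\<^sub>R X)" using tpos unfolding u_def by simp
    have un: "u \<in> sphere 0 1" unfolding u_def t_def using tpos by (simp add: t_def)
    have "norm ((1/t) *\<^sub>R X) = norm X / t" using tpos by simp
    also have "\<dots> \<le> norm X" using t1 by (simp add: divide_le_eq mult_le_cancel_left1)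
    finally have "(1/t) *\<^sub>R X \<in> cball 0 (norm X)" by simp
    hence uK: "(u, 0) \<in> K" and u2K: "(u, (1/t) *\<^sub>R X) \<in> K" unfolding K_def using un by auto
    have "dist (u, (1/t) *\<^sub>R X) (u, 0) = norm X / t" using tpos by (simp add: dist_Pair_Pair)
    also have "\<dots> < d" using tX tpos d(1) by (simp add: field_simps)
    finally have "dist (\<zeta> (u, (1/t) *\<^sub>R X)) (\<zeta> (u,0)) < \<epsilon> * c" using d(2) uK u2K by blast
    moreover have "\<zeta> (u, 0) = 0" using nz unfolding normalized_qs_def by blast
    ultimately have "\<bar>\<zeta> (u, (1/t) *\<^sub>R X)\<bar> \<le> \<epsilon> * c" by (simp add: dist_real_def)
    moreover have "\<zeta> (v, X) = t * \<zeta> (u, (1/t) *\<^sub>R X)" by (subst eq, rule hom)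
    ultimately have "\<bar>\<zeta> (v, X)\<bar> \<le> t * (\<epsilon> * c)" using tpos by (simp add: abs_mult mult_left_mono)
    also have "\<dots> = \<epsilon> * (c * norm v)" by (simp add: t_def)
    also have "\<dots> \<le> \<epsilon> * N v" using c(2) ep by simp
    finally show "\<bar>\<zeta> (v, X)\<bar> \<le> \<epsilon> * N v" .
  qed
qed

end
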